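(* Let $S$ be a finite set of possibly partial distributions all with the same total mass, and let $\textsc{OPT}_S$ be a minimum-entropy coupling of $S$ (viewed as a possibly partial distribution via its list of nonzero masses). Then $\textsc{Inv-Sketch}_{\textsc{OPT}_S}(y)\ge\textsc{Inv-Prof}_S(y)$ for all $y\in[0,1]$.
   Context: A possibly partial distribution is a finite vector of nonnegative reals with total mass at most $1$. A coupling of $S=\{p_1,\dots,p_m\}$ is a nonnegative array $\mathcal C(i_1,\dots,i_m)$ whose sum over all tuples with $k$-th coordinate $i_k$ equals $p_k(i_k)$; $\textsc{OPT}_S$ minimizes $\sum\mathcal C(i)\log_2(1/\mathcal C(i))$. For a possibly partial distribution $p$, $\textsc{Inv-Sketch}_p(y)=\sum_j p(j)\,[p(j)\le y]$, and $\textsc{Inv-Prof}_S(y)=\max_{p\in S}\textsc{Inv-Sketch}_p(y)$. *)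

theory Defs
  imports Complex_Main
begin

definition partial_dist :: "real list \<Rightarrow> bool" where
  "partial_dist p \<longleftrightarrow> (\<forall>x\<in>set p. 0 \<le> x) \<and> sum_list p \<le> 1"

definition tuples :: "real list list \<Rightarrow> nat list set" where
  "tuples ps = {t. length t = length ps \<and> (\<forall>k<length ps. t ! k < length (ps ! k))}"

definition is_coupling :: "real list list \<Rightarrow> (nat list \<Rightarrow> real) \<Rightarrow> bool" where
  "is_coupling ps C \<longleftrightarrow>
     (\<forall>t\<in>tuples ps. 0 \<le> C t) \<and>
     (\<forall>k<length ps. \<forall>i<length (ps ! k).
        (\<Sum>t\<in>{t\<in>tuples ps. t ! k = i}. C t) = ps ! k ! i)"

definition coupling_entropy :: "real list list \<Rightarrow> (nat list \<Rightarrow> real) \<Rightarrow> real" where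
  "coupling_entropy ps C = (\<Sum>t\<in>tuples ps. C t * log 2 (1 / C t))"

definition is_min_entropy_coupling :: "real list list \<Rightarrow> (nat list \<Rightarrow> real) \<Rightarrow> bool" where
  "is_min_entropy_coupling ps C \<longleftrightarrow> is_coupling ps C \<and>
     (\<forall>C'. is_coupling ps C' \<longrightarrow> coupling_entropy ps C \<le> coupling_entropy ps C')"

definition inv_sketch :: "real list \<Rightarrow> real \<Rightarrow> real" where
  "inv_sketch p y = sum_list (map (\<lambda>x. if x \<le> y then x else 0) p)"

definition inv_prof :: "real list list \<Rightarrow> real \<Rightarrow> real" where
  "inv_prof ps y = Max ((\<lambda>p. inv_sketch p y) ` set ps)"

text \<open>Inv-Sketch of a coupling viewed as a possibly partial distribution via its
  masses (zero masses contribute nothing).\<close>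
definition coupling_inv_sketch :: "real list list \<Rightarrow> (nat list \<Rightarrow> real) \<Rightarrow> real \<Rightarrow> real" where
  "coupling_inv_sketch ps C y = (\<Sum>t\<in>tuples ps. if C t \<le> y then C t else 0)"

end

theory Submission
  imports Defs
begin

lemma finite_tuples: "finite (tuples ps)"
proof -
  let ?B = "sum_list (map length ps)"
  have "tuples ps \<subseteq> {t. set t \<subseteq> {..<?B} \<and> length t = length ps}"
  proof
    fix t assume t: "t \<in> tuples ps"
    have "set t \<subseteq> {..<?B}"
    proof
      fix x assume "x \<in> set t"
      then obtain k where k: "k < length t" "t ! k = x" by (auto simp: in_set_conv_nth)
      with t have "k < length ps" "x < length (ps ! k)" by (auto simp: tuples_def)
      moreover have "length (ps ! k) \<le> ?B"
        using elem_le_sum_list[of k "map length ps"] \<open>k < length ps\<close> by simp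
      ultimately show "x \<in> {..<?B}" by simp
    qed
    with t show "t \<in> {t. set t \<subseteq> {..<?B} \<and> length t = length ps}" by (auto simp: tuples_def)
  qed
  moreover have "finite {t. set t \<subseteq> {..<?B} \<and> length t = length ps}"
    by (rule finite_lists_length_eq) simp
  ultimately show ?thesis by (rule finite_subset)
qed

lemma one_marginal:
  assumes cp: "is_coupling ps C" and k: "k < length ps"
  shows "inv_sketch (ps ! k) y \<le> coupling_inv_sketch ps C y"
proof -
  let ?p = "ps ! k"
  let ?T = "tuples ps"
  define I where "I = {i. i < length ?p \<and> ?p ! i \<le> y}"
  have fin: "finite ?T" by (rule finite_tuples)
  have nn: "\<And>t. t \<in> ?T \<Longrightarrow> 0 \<le> C t" using cp by (auto simp: is_coupling_def)
  have marg: "\<And>i. i < length ?p \<Longrightarrow> (\<Sum>t\<in>{t\<in>?T. t ! k = i}. C t) = ?p ! i"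
    using cp k by (auto simp: is_coupling_def)
  have "inv_sketch ?p y = (\<Sum>i<length ?p. if ?p ! i \<le> y then ?p ! i else 0)"
    unfolding inv_sketch_def by (simp add: sum_list_sum_nth atLeast0LessThan)
  also have "\<dots> = (\<Sum>i<length ?p. (\<Sum>t\<in>{t\<in>?T. t ! k = i}. if t ! k \<in> I then C t else 0))"
  proof (rule sum.cong[OF refl])
    fix i assume i: "i \<in> {..<length ?p}"
    have "(\<Sum>t\<in>{t\<in>?T. t ! k = i}. if t ! k \<in> I then C t else 0)
        = (\<Sum>t\<in>{t\<in>?T. t ! k = i}. if i \<in> I then C t else 0)"
      by (rule sum.cong) auto
    also have "\<dots> = (if i \<in> I then ?p ! i else 0)"
      using marg[of i] i by auto
    finally show "(if ?p ! i \<le> y then ?p ! i else 0) =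
        (\<Sum>t\<in>{t\<in>?T. t ! k = i}. if t ! k \<in> I then C t else 0)"
      using i by (auto simp: I_def)
  qed
  also have "\<dots> = (\<Sum>t\<in>?T. if t ! k \<in> I then C t else 0)"
    by (rule sum.group[OF fin]) (use k in \<open>auto simp: tuples_def\<close>)
  also have "\<dots> \<le> (\<Sum>t\<in>?T. if C t \<le> y then C t else 0)"
  proof (rule sum_mono)
    fix t assume t: "t \<in> ?T"
    show "(if t ! k \<in> I then C t else 0) \<le> (if C t \<le> y then C t else 0)"
    proof (cases "t ! k \<in> I")
      case True
      have "C t \<le> (\<Sum>t\<in>{s\<in>?T. s ! k = t ! k}. C t)"
        by (rule member_le_sum) (use t fin nn in auto)
      also have "\<dots> = ?p ! (t ! k)" using marg True by (auto simp: I_def)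
      also have "\<dots> \<le> y" using True by (auto simp: I_def)
      finally show ?thesis using True by simp
    next
      case False
      then show ?thesis using nn[OF t] by simp
    qed
  qed
  finally show ?thesis unfolding coupling_inv_sketch_def .
qed

theorem lemma4:
  fixes ps :: "real list list" and C :: "nat list \<Rightarrow> real" and y :: real
  assumes "ps \<noteq> []"
    and "\<forall>p\<in>set ps. partial_dist p"
    and "\<forall>p\<in>set ps. \<forall>q\<in>set ps. sum_list p = sum_list q"
    and "is_min_entropy_coupling ps C"
    and "0 \<le> y" and "y \<le> 1"
  shows "coupling_inv_sketch ps C y \<ge> inv_prof ps y"
proof -
  have cp: "is_coupling ps C" using assms(4) by (simp add: is_min_entropy_coupling_def)
  show ?thesis
    unfolding inv_prof_def
  proof (subst Max_le_iff)
    show "finite ((\<lambda>p. inv_sketch p y) ` set ps)" by simp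
    show "(\<lambda>p. inv_sketch p y) ` set ps \<noteq> {}" using assms(1) by simp
    show "\<forall>a\<in>(\<lambda>p. inv_sketch p y) ` set ps. a \<le> coupling_inv_sketch ps C y"
      using one_marginal[OF cp] by (auto simp: in_set_conv_nth)
  qed
qed

end
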